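(* Let $t\ge 1$ and $s\ge 3$ be integers with $s>(2^t+1)2^{t-1}$, and let $H_{t,s}=K_t\times C_s$. Then $H_{t,s}$ is $(t+1)$-regular, its edge connectivity is $t+1$, and $m(H_{t,s})\le 2^t$.
   Context: All graphs are finite and simple. $K_t$ is the complete graph on $t$ vertices and $C_s$ the cycle on $s$ vertices. The Cartesian product $H_1\times H_2$ of $H_1=(V_1,E_1)$ and $H_2=(V_2,E_2)$ has vertex set $V_1\times V_2$, with $(v_1,v_2)$ adjacent to $(u_1,u_2)$ iff either $v_1=u_1$ and $v_2u_2\in E_2$, or $v_2=u_2$ and $v_1u_1\in E_1$. The edge connectivity of a graph is the minimum number of edges whose removal disconnects it. For graphs $G_1=(V,E_1)$, $G_2=(V,E_2)$, their symmetric difference is $(V,E_1\oplus E_2)$. A connectivity code for $H=(V,E)$ is a collection of distinct spanning subgraphs $(V,E')$, $E'\subseteq E$, such that the symmetric difference of any two distinct members is a connected graph on $V$; $m(H)$ is the maximum cardinality of a connectivity code for $H$. *)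

theory Defs
  imports Main
begin

type_synonym 'a graph = "'a set \<times> 'a set set"

definition verts :: "'a graph \<Rightarrow> 'a set" where "verts G = fst G"
definition edges :: "'a graph \<Rightarrow> 'a set set" where "edges G = snd G"

definition simple_graph :: "'a graph \<Rightarrow> bool" where
  "simple_graph G \<longleftrightarrow> finite (verts G) \<and>
     (\<forall>e\<in>edges G. e \<subseteq> verts G \<and> card e = 2)"

definition complete_graph :: "nat \<Rightarrow> nat graph" where
  "complete_graph t = ({0..<t}, {{i, j} | i j. i < t \<and> j < t \<and> i \<noteq> j})"

text \<open>The cycle C_s on vertices 0,...,s-1 (meant for s \<ge> 3).\<close>
definition cycle_graph :: "nat \<Rightarrow> nat graph" where
  "cycle_graph s = ({0..<s}, {{i, (i + 1) mod s} | i. i < s})"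

definition cart_prod :: "'a graph \<Rightarrow> 'b graph \<Rightarrow> ('a \<times> 'b) graph" where
  "cart_prod G H = (verts G \<times> verts H,
     {{(v1, v2), (u1, u2)} | v1 v2 u1 u2.
        (v1 = u1 \<and> v1 \<in> verts G \<and> {v2, u2} \<in> edges H) \<or>
        (v2 = u2 \<and> v2 \<in> verts H \<and> {v1, u1} \<in> edges G)})"

definition degree :: "'a graph \<Rightarrow> 'a \<Rightarrow> nat" where
  "degree G v = card {e \<in> edges G. v \<in> e}"

definition regular :: "nat \<Rightarrow> 'a graph \<Rightarrow> bool" where
  "regular k G \<longleftrightarrow> (\<forall>v\<in>verts G. degree G v = k)"

definition adj_rel :: "'a set set \<Rightarrow> ('a \<times> 'a) set" where
  "adj_rel E = {(x, y). {x, y} \<in> E \<and> x \<noteq> y}"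

definition connected_graph :: "'a graph \<Rightarrow> bool" where
  "connected_graph G \<longleftrightarrow> verts G \<noteq> {} \<and>
     (\<forall>u\<in>verts G. \<forall>v\<in>verts G. (u, v) \<in> (adj_rel (edges G))\<^sup>*)"

definition edge_connectivity :: "'a graph \<Rightarrow> nat" where
  "edge_connectivity G =
     Min {card F | F. F \<subseteq> edges G \<and> \<not> connected_graph (verts G, edges G - F)}"

text \<open>A connectivity code: a collection of distinct spanning subgraphs (given by their
  edge sets) whose pairwise symmetric differences are connected graphs on V.\<close>
definition connectivity_code :: "'a graph \<Rightarrow> 'a set set set \<Rightarrow> bool" where
  "connectivity_code G C \<longleftrightarrow> (\<forall>E'\<in>C. E' \<subseteq> edges G) \<and>
     (\<forall>E1\<in>C. \<forall>E2\<in>C. E1 \<noteq> E2 \<longrightarrow>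
        connected_graph (verts G, (E1 - E2) \<union> (E2 - E1)))"

definition max_code :: "'a graph \<Rightarrow> nat" where
  "max_code G = Max {card C | C. connectivity_code G C}"

end

theory Submission
  imports Defs
begin


lemma verts_G: "verts (cart_prod (complete_graph t) (cycle_graph s)) = {0..<t} \<times> {0..<s}"
  by (simp add: cart_prod_def complete_graph_def cycle_graph_def verts_def edges_def)

lemma edges_G_iff:
  "e \<in> edges (cart_prod (complete_graph t) (cycle_graph s)) \<longleftrightarrow>
    (\<exists>v i. v < t \<and> i < s \<and> e = {(v,i),(v,Suc i mod s)}) \<or>
    (\<exists>a b i. a < t \<and> b < t \<and> a \<noteq> b \<and> i < s \<and> e = {(a,i),(b,i)})"
proof
  assume "e \<in> edges (cart_prod (complete_graph t) (cycle_graph s))"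
  then have "\<exists>v1 v2 u1 u2. e = {(v1, v2), (u1, u2)} \<and>
    ((v1 = u1 \<and> v1 < t \<and> (\<exists>i. {v2, u2} = {i, Suc i mod s} \<and> i < s)) \<or>
        (v2 = u2 \<and> v2 < s \<and> (\<exists>i j. {v1, u1} = {i, j} \<and> i < t \<and> j < t \<and> i \<noteq> j)))"
    by (simp add: cart_prod_def complete_graph_def cycle_graph_def verts_def edges_def)
  then obtain v1 v2 u1 u2 where e: "e = {(v1, v2), (u1, u2)}" and
    h: "(v1 = u1 \<and> v1 < t \<and> (\<exists>i. {v2, u2} = {i, Suc i mod s} \<and> i < s)) \<or>
        (v2 = u2 \<and> v2 < s \<and> (\<exists>i j. {v1, u1} = {i, j} \<and> i < t \<and> j < t \<and> i \<noteq> j))"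
    by blast
  from h show "(\<exists>v i. v < t \<and> i < s \<and> e = {(v,i),(v,Suc i mod s)}) \<or>
    (\<exists>a b i. a < t \<and> b < t \<and> a \<noteq> b \<and> i < s \<and> e = {(a,i),(b,i)})"
  proof
    assume "v1 = u1 \<and> v1 < t \<and> (\<exists>i. {v2, u2} = {i, Suc i mod s} \<and> i < s)"
    then obtain i where "v1 = u1" "v1 < t" "i < s" "{v2,u2} = {i, Suc i mod s}" by auto
    then show ?thesis unfolding e by (auto simp: doubleton_eq_iff insert_commute)
  next
    assume "v2 = u2 \<and> v2 < s \<and> (\<exists>i j. {v1, u1} = {i, j} \<and> i < t \<and> j < t \<and> i \<noteq> j)"
    then obtain a b where "v2 = u2" "v2 < s" "a<t" "b<t" "a\<noteq>b" "{v1,u1} = {a,b}" by auto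
    then show ?thesis unfolding e by (auto simp: doubleton_eq_iff insert_commute)
  qed
next
  assume "(\<exists>v i. v < t \<and> i < s \<and> e = {(v,i),(v,Suc i mod s)}) \<or>
    (\<exists>a b i. a < t \<and> b < t \<and> a \<noteq> b \<and> i < s \<and> e = {(a,i),(b,i)})"
  then show "e \<in> edges (cart_prod (complete_graph t) (cycle_graph s))"
  proof
    assume "\<exists>v i. v < t \<and> i < s \<and> e = {(v,i),(v,Suc i mod s)}"
    then obtain v i where "v < t" "i < s" "e = {(v,i),(v,Suc i mod s)}" by auto
    then show ?thesis unfolding cart_prod_def complete_graph_def cycle_graph_def verts_def edges_def
      by simp (rule exI[of _ v], rule exI[of _ i], rule exI[of _ v], rule exI[of _ "Suc i mod s"], auto)
  next
    assume "\<exists>a b i. a < t \<and> b < t \<and> a \<noteq> b \<and> i < s \<and> e = {(a,i),(b,i)}"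
    then obtain a b i where "a < t" "b<t" "a\<noteq>b" "i < s" "e = {(a,i),(b,i)}" by auto
    then show ?thesis unfolding cart_prod_def complete_graph_def cycle_graph_def verts_def edges_def
      by simp (rule exI[of _ a], rule exI[of _ i], rule exI[of _ b], rule exI[of _ i], auto)
  qed
qed

lemma mod_pred_iff:
  fixes s i m :: nat assumes "i < s" "m < s"
  shows "i = Suc m mod s \<longleftrightarrow> m = (i + s - 1) mod s"
proof (cases "m = s - 1")
  case True
  then have "Suc m = s" using assms by simp
  then show ?thesis using assms True by (cases "i = 0") (auto simp: mod_if)
next
  case False
  then have "Suc m < s" using assms by simp
  then show ?thesis using assms by (cases "i = 0") (auto simp: mod_if)
qed

lemma mod_neq3:
  fixes s i :: nat assumes "i < s" "s \<ge> 3"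
  shows "Suc i mod s \<noteq> (i + s - 1) mod s" "Suc i mod s \<noteq> i" "(i + s - 1) mod s \<noteq> i"
  using assms by (auto simp: mod_if)

abbreviation HG :: "nat \<Rightarrow> nat \<Rightarrow> (nat \<times> nat) graph" where
  "HG t s \<equiv> cart_prod (complete_graph t) (cycle_graph s)"

lemma degree_HG:
  assumes "v < t" "i < s" "s \<ge> 3"
  shows "degree (HG t s) (v, i) = t + 1"
proof -
  define N where "N = {(v, Suc i mod s), (v, (i + s - 1) mod s)} \<union> (\<lambda>b. (b, i)) ` ({0..<t} - {v})"
  have ne: "Suc i mod s \<noteq> (i + s - 1) mod s" "Suc i mod s \<noteq> i" "(i + s - 1) mod s \<noteq> i"
    using mod_neq3 assms by auto
  have eq: "{e \<in> edges (HG t s). (v, i) \<in> e} = (\<lambda>y. {(v,i), y}) ` N"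
  proof (rule set_eqI, rule iffI)
    fix e assume "e \<in> {e \<in> edges (HG t s). (v, i) \<in> e}"
    then have e: "e \<in> edges (HG t s)" "(v,i) \<in> e" by auto
    from e(1)[unfolded edges_G_iff] show "e \<in> (\<lambda>y. {(v,i), y}) ` N"
    proof (elim disjE exE conjE)
      fix w m assume h: "w < t" "m < s" "e = {(w, m), (w, Suc m mod s)}"
      then consider "(v,i) = (w,m)" | "(v,i) = (w, Suc m mod s)" using e(2) by auto
      then show ?thesis
      proof cases
        case 1 then show ?thesis using h by (auto simp: N_def)
      next
        case 2
        then have "m = (i + s - 1) mod s" using mod_pred_iff[of i s m] h assms by auto
        then show ?thesis using h 2 unfolding N_def by (auto simp: insert_commute)
      qed
    next
      fix a b m assume h: "a < t" "b < t" "a \<noteq> b" "m < s" "e = {(a, m), (b, m)}"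
      then consider "(v,i) = (a,m)" | "(v,i) = (b, m)" using e(2) by auto
      then show ?thesis
      proof cases
        case 1 then show ?thesis using h by (auto simp: N_def)
      next
        case 2 then show ?thesis using h by (auto simp: N_def insert_commute)
      qed
    qed
  next
    fix e assume "e \<in> (\<lambda>y. {(v,i), y}) ` N"
    then obtain y where y: "y \<in> N" "e = {(v,i), y}" by auto
    have "e \<in> edges (HG t s)"
    proof -
      { assume "y = (v, Suc i mod s)"
        then have ?thesis using y assms unfolding edges_G_iff by auto }
      moreover
      { assume yy: "y = (v, (i + s - 1) mod s)"
        have "i = Suc ((i + s - 1) mod s) mod s" using mod_pred_iff[of i s "(i + s - 1) mod s"] assms by auto
        then have "e = {(v, (i + s - 1) mod s), (v, Suc ((i + s - 1) mod s) mod s)}"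
          using y yy by auto
        then have ?thesis using assms unfolding edges_G_iff
          by (intro disjI1 exI[of _ v] exI[of _ "(i + s - 1) mod s"]) auto }
      moreover
      { fix b assume "b < t" "b \<noteq> v" "y = (b, i)"
        then have ?thesis using y assms unfolding edges_G_iff by blast }
      moreover have "y = (v, Suc i mod s) \<or> y = (v, (i + s - 1) mod s) \<or> (\<exists>b. b<t \<and> b\<noteq>v \<and> y=(b,i))"
        using y(1) unfolding N_def by auto
      ultimately show ?thesis by blast
    qed
    then show "e \<in> {e \<in> edges (HG t s). (v, i) \<in> e}" using y by auto
  qed
  have inj: "inj_on (\<lambda>y. {(v,i), y}) N"
  proof (rule inj_onI)
    fix y z assume "y \<in> N" "z \<in> N" "{(v,i), y} = {(v,i), z}"
    moreover have "(v,i) \<notin> N" using ne unfolding N_def by auto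
    ultimately show "y = z" by (auto simp: doubleton_eq_iff)
  qed
  have "card N = t + 1"
  proof -
    have "card ((\<lambda>b. (b, i)) ` ({0..<t} - {v})) = t - 1"
      using assms by (subst card_image) (auto simp: inj_on_def)
    moreover have "card {(v, Suc i mod s), (v, (i + s - 1) mod s)} = 2" using ne by auto
    moreover have "{(v, Suc i mod s), (v, (i + s - 1) mod s)} \<inter> (\<lambda>b. (b, i)) ` ({0..<t} - {v}) = {}"
      by auto
    ultimately show ?thesis unfolding N_def using assms by (subst card_Un_disjoint) auto
  qed
  then show ?thesis unfolding degree_def eq using card_image[OF inj] by simp
qed

lemma regular_HG: "s \<ge> 3 \<Longrightarrow> regular (t + 1) (HG t s)"
  unfolding regular_def verts_G using degree_HG by auto

lemma col_in_E: "v < t \<Longrightarrow> m < s \<Longrightarrow> {(v,m),(v,Suc m mod s)} \<in> edges (HG t s)"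
  unfolding edges_G_iff by blast

lemma lay_in_E: "a < t \<Longrightarrow> b < t \<Longrightarrow> a \<noteq> b \<Longrightarrow> m < s \<Longrightarrow> {(a,m),(b,m)} \<in> edges (HG t s)"
  unfolding edges_G_iff by blast

lemma finite_E: "finite (edges (HG t s))"
proof -
  have "edges (HG t s) \<subseteq> Pow ({0..<t} \<times> {0..<s})"
    unfolding edges_G_iff by (auto simp: edges_G_iff)
  then show ?thesis by (rule finite_subset) auto
qed

lemma sym_adj: "sym (adj_rel E)"
  unfolding adj_rel_def sym_def by (auto simp: insert_commute)

lemma adjI: "{x, y} \<in> E \<Longrightarrow> x \<noteq> y \<Longrightarrow> (x, y) \<in> adj_rel E"
  unfolding adj_rel_def by auto

lemma cycle_conn:
  fixes s k :: nat and f :: "nat \<Rightarrow> 'a"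
  assumes "sym R" "k < s" "\<And>m. m < s \<Longrightarrow> m \<noteq> k \<Longrightarrow> (f m, f (Suc m mod s)) \<in> R" "j < s"
  shows "(f j, f 0) \<in> R\<^sup>*"
proof -
  have A: "n < s \<Longrightarrow> (f (Suc k mod s), f ((Suc k + n) mod s)) \<in> R\<^sup>*" for n
  proof (induction n)
    case 0 then show ?case by simp
  next
    case (Suc n)
    have ne: "(Suc k + n) mod s \<noteq> k" using Suc.prems assms(2) by (auto simp: mod_if)
    have "(f ((Suc k + n) mod s), f (Suc ((Suc k + n) mod s) mod s)) \<in> R"
      using assms(3)[OF _ ne] assms(2) by simp
    moreover have "Suc ((Suc k + n) mod s) mod s = (Suc k + Suc n) mod s" by (simp add: mod_Suc_eq)
    ultimately show ?case using Suc by (metis Suc_lessD rtrancl.rtrancl_into_rtrancl)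
  qed
  have B: "i < s \<Longrightarrow> (f (Suc k mod s), f i) \<in> R\<^sup>*" for i
  proof -
    assume i: "i < s"
    show ?thesis
    proof (cases "k < i")
      case True
      then have "(Suc k + (i - Suc k)) mod s = i" using i by simp
      then show ?thesis using A[of "i - Suc k"] i by simp
    next
      case False
      then have "(Suc k + (i + s - Suc k)) mod s = i" using i assms(2) by simp
      then show ?thesis using A[of "i + s - Suc k"] i assms(2) False by simp
    qed
  qed
  have "sym (R\<^sup>*)" using assms(1) by (rule sym_rtrancl)
  then have "(f j, f (Suc k mod s)) \<in> R\<^sup>*" using B[OF assms(4)] by (auto simp: sym_def)
  then show ?thesis using B[of 0] assms(2) by (metis not_less0 gr0I rtrancl_trans)
qed

lemma col_eq_iff:
  assumes "s \<ge> 3" "m < s" "m' < s"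
  shows "{(v,m),(v,Suc m mod s)} = {(w,m'),(w,Suc m' mod s)} \<longleftrightarrow> v = w \<and> m = m'"
  using assms by (auto simp: doubleton_eq_iff mod_if split: if_splits)



context
  fixes t s :: nat and F :: "(nat \<times> nat) set set"
  assumes t1: "t \<ge> 1" and s3: "s \<ge> 3" and ts: "t < s"
    and FE: "F \<subseteq> edges (HG t s)" and cF: "card F \<le> t"
begin

private definition good :: "nat \<Rightarrow> bool" where
  "good v \<longleftrightarrow> card {m. m < s \<and> {(v,m),(v,Suc m mod s)} \<in> F} \<le> 1"

private abbreviation "R \<equiv> adj_rel (edges (HG t s) - F)"

private lemma finF: "finite F" using FE finite_E finite_subset by blast

private lemma edgeR: "{x, y} \<in> edges (HG t s) \<Longrightarrow> {x, y} \<notin> F \<Longrightarrow> x \<noteq> y \<Longrightarrow> (x, y) \<in> R"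
  by (rule adjI) auto

private lemma symR: "sym (R\<^sup>*)" by (rule sym_rtrancl[OF sym_adj])

private lemma Rsym: "(x, y) \<in> R\<^sup>* \<Longrightarrow> (y, x) \<in> R\<^sup>*"
  using symR by (metis symD)

private lemma good_col:
  assumes "good c" "c < t" "j < s"
  shows "((c, j), (c, 0)) \<in> R\<^sup>*"
proof -
  let ?A = "{m. m < s \<and> {(c,m),(c,Suc m mod s)} \<in> F}"
  have fin: "finite ?A" by auto
  obtain k where k: "k < s" "\<And>m. m < s \<Longrightarrow> m \<noteq> k \<Longrightarrow> {(c,m),(c,Suc m mod s)} \<notin> F"
  proof (cases "?A = {}")
    case True then show ?thesis using that[of 0] s3 by auto
  next
    case False
    then obtain k where "k \<in> ?A" by blast
    moreover have "card ?A \<le> Suc 0" using assms(1) unfolding good_def by simp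
    then have "\<forall>x\<in>?A. \<forall>y\<in>?A. x = y" using card_le_Suc0_iff_eq[OF fin] by blast
    ultimately show ?thesis using that[of k] by blast
  qed
  have "(\<lambda>m. (c, m)) j = (c, j)" by simp
  have "((\<lambda>m. (c, m)) j, (\<lambda>m. (c, m)) 0) \<in> R\<^sup>*"
  proof (rule cycle_conn[OF sym_adj k(1) _ assms(3)])
    fix m assume m: "m < s" "m \<noteq> k"
    show "((c, m), (c, Suc m mod s)) \<in> R"
      using edgeR[OF col_in_E[OF assms(2) m(1)] k(2)[OF m]] mod_neq3(2)[OF m(1) s3] by auto
  qed
  then show ?thesis by simp
qed

private lemma layer_link:
  assumes "c < t" "d < t" "c \<noteq> d"
  shows "\<exists>j<s. {(c,j),(d,j)} \<notin> F"
proof (rule ccontr)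
  assume "\<not> ?thesis"
  then have sub: "(\<lambda>j. {(c,j),(d,j)}) ` {0..<s} \<subseteq> F" by auto
  have inj: "inj_on (\<lambda>j. {(c,j),(d,j)}) {0..<s}"
  proof (rule inj_onI)
    fix j j' assume "{(c,j),(d,j)} = {(c,j'),(d,j')}"
    then have "(c,j) \<in> {(c,j'),(d,j')}" by blast
    then show "j = j'" using assms(3) by auto
  qed
  have "card {0..<s} \<le> card F" using card_inj_on_le[OF inj sub finF] .
  then show False using cF ts by simp
qed

private lemma bad_escape:
  assumes "\<not> good v" "v < t" "i < s"
  shows "\<exists>c<t. good c \<and> {(v,i),(c,i)} \<notin> F"
proof (rule ccontr)
  assume H: "\<not> ?thesis"
  define A where "A w = {m. m < s \<and> {(w,m),(w,Suc m mod s)} \<in> F}" for w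
  have finA: "finite (A w)" for w unfolding A_def by auto
  have "card (A v) \<ge> 2" using assms(1) unfolding good_def A_def by simp
  then have "\<not> card (A v) \<le> Suc 0" by simp
  then have "\<not> (\<forall>x\<in>A v. \<forall>y\<in>A v. x = y)" using card_le_Suc0_iff_eq[OF finA] by blast
  then obtain m1 m2 where m12: "m1 \<in> A v" "m2 \<in> A v" "m1 \<noteq> m2" by blast
  have Ane: "\<not> good w \<Longrightarrow> A w \<noteq> {}" for w
  proof
    assume "\<not> good w" "A w = {}"
    then have "card (A w) \<le> 1" by simp
    then show False using \<open>\<not> good w\<close> unfolding good_def A_def by simp
  qed
  define mw where "mw w = (if w = v then m1 else SOME m. m \<in> A w)" for w
  have mw: "\<not> good w \<Longrightarrow> mw w \<in> A w" for w
    using Ane[of w] m12 unfolding mw_def by (auto intro: someI_ex)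
  define g where "g n = (if n = t then {(v,m2),(v,Suc m2 mod s)}
      else if good n then {(v,i),(n,i)} else {(n,mw n),(n,Suc (mw n) mod s)})" for n
  have gF: "g ` {..t} \<subseteq> F"
  proof
    fix e assume "e \<in> g ` {..t}"
    then obtain n where n: "n \<le> t" "e = g n" by auto
    show "e \<in> F"
    proof (cases "n = t")
      case True then show ?thesis using n m12 unfolding g_def A_def by auto
    next
      case False
      then have "n < t" using n by simp
      then show ?thesis using n H mw[of n] False unfolding g_def A_def by auto
    qed
  qed
  have As: "m \<in> A w \<Longrightarrow> m < s" for m w unfolding A_def by auto
  have gt: "g t = {(v,m2),(v,Suc m2 mod s)}" unfolding g_def by simp
  have gg: "n \<noteq> t \<Longrightarrow> good n \<Longrightarrow> g n = {(v,i),(n,i)}" for n unfolding g_def by simp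
  have gb: "n \<noteq> t \<Longrightarrow> \<not> good n \<Longrightarrow> g n = {(n,mw n),(n,Suc (mw n) mod s)}" for n unfolding g_def by simp
  have gv: "good n \<Longrightarrow> n \<noteq> v" for n using assms(1) by auto
  have fst_lay: "good n \<Longrightarrow> {(v,i),(n,i)} \<noteq> {(w,m),(w,m')}" for n w m m'
  proof
    assume "good n" "{(v,i),(n,i)} = {(w,m),(w,m')}"
    then have "(v,i) \<in> {(w,m),(w,m')}" "(n,i) \<in> {(w,m),(w,m')}" by blast+
    then have "v = w" "n = w" by auto
    then show False using gv[OF \<open>good n\<close>] by simp
  qed
  have lay_inj: "good n \<Longrightarrow> good n' \<Longrightarrow> {(v,i),(n,i)} = {(v,i),(n',i)} \<Longrightarrow> n = n'" for n n'
  proof -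
    assume a: "good n" "good n'" "{(v,i),(n,i)} = {(v,i),(n',i)}"
    then have "(n,i) \<in> {(v,i),(n',i)}" by blast
    then show "n = n'" using gv[OF a(1)] by auto
  qed
  have colI: "w = w' \<and> m = m'" if "m < s" "m' < s" "{(w,m),(w,Suc m mod s)} = {(w',m'),(w',Suc m' mod s)}"
    for w w' m m' by (rule iffD1[OF col_eq_iff[OF s3 that(1) that(2)] that(3)])
  have mv: "mw v = m1" unfolding mw_def by simp
  have inj: "inj_on g {..t}"
  proof (rule inj_onI)
    fix n n' assume n: "n \<in> {..t}" "n' \<in> {..t}" and eq: "g n = g n'"
    have X: "n \<noteq> t \<Longrightarrow> g n \<noteq> g t" for n
    proof
      assume nt: "n \<noteq> t" and e: "g n = g t"
      show False
      proof (cases "good n")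
        case True then show False using e gt gg[OF nt] fst_lay by metis
      next
        case False
        have "n = v \<and> mw n = m2" using colI[OF As[OF mw[OF False]] As[OF m12(2)]] e gt gb[OF nt False] by metis
        then show False using mv m12(3) by metis
      qed
    qed
    show "n = n'"
    proof (cases "n = t \<or> n' = t")
      case True then show ?thesis using X eq by metis
    next
      case False
      then have nt: "n \<noteq> t" "n' \<noteq> t" by auto
      show ?thesis
      proof (cases "good n"; cases "good n'")
        assume "good n" "good n'"
        then show ?thesis using eq gg[OF nt(1)] gg[OF nt(2)] lay_inj by metis
      next
        assume "good n" "\<not> good n'"
        then show ?thesis using eq gg[OF nt(1)] gb[OF nt(2)] fst_lay by metis
      next
        assume "\<not> good n" "good n'"
        then show ?thesis using eq gb[OF nt(1)] gg[OF nt(2)] fst_lay by metis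
      next
        assume a: "\<not> good n" "\<not> good n'"
        then show ?thesis using eq gb[OF nt(1) a(1)] gb[OF nt(2) a(2)] colI[OF As[OF mw[OF a(1)]] As[OF mw[OF a(2)]]] by metis
      qed
    qed
  qed
  have "card {..t} \<le> card F" using card_inj_on_le[OF inj gF finF] .
  then show False using cF by simp
qed

lemma conn_after_removal: "connected_graph (verts (HG t s), edges (HG t s) - F)"
proof -
  obtain c0 where c0: "c0 < t" "good c0"
  proof (cases "good 0")
    case True then show ?thesis using that t1 by auto
  next
    case False
    then show ?thesis using that bad_escape[OF False _ ] t1 s3 by fastforce
  qed
  have reach_good: "((v,i),(c0,0)) \<in> R\<^sup>*" if v: "good v" "v < t" "i < s" for v i
  proof (cases "v = c0")
    case True then show ?thesis using good_col v by simp
  next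
    case False
    obtain j where j: "j < s" "{(v,j),(c0,j)} \<notin> F" using layer_link[OF v(2) c0(1) False] by blast
    have "((v,j),(c0,j)) \<in> R" using edgeR[OF lay_in_E[OF v(2) c0(1) False j(1)] j(2)] False by simp
    moreover have "((v,i),(v,0)) \<in> R\<^sup>*" using good_col v by simp
    moreover have "((v,0),(v,j)) \<in> R\<^sup>*" using Rsym[OF good_col[OF v(1,2) j(1)]] .
    moreover have "((c0,j),(c0,0)) \<in> R\<^sup>*" using good_col[OF c0(2) c0(1) j(1)] .
    ultimately show ?thesis by (meson r_into_rtrancl rtrancl_trans)
  qed
  have reach: "(x,(c0,0)) \<in> R\<^sup>*" if xV: "x \<in> {0..<t} \<times> {0..<s}" for x
  proof -
    obtain v i where x: "x = (v,i)" "v < t" "i < s" using xV by (cases x) auto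
    show ?thesis
    proof (cases "good v")
      case True then show ?thesis using reach_good x by simp
    next
      case False
      obtain c where c: "c < t" "good c" "{(v,i),(c,i)} \<notin> F" using bad_escape[OF False x(2,3)] by blast
      have cv: "c \<noteq> v" using c(2) False by auto
      have "((v,i),(c,i)) \<in> R" using edgeR[OF lay_in_E[OF x(2) c(1) cv[symmetric] x(3)] c(3)] cv by simp
      then show ?thesis using reach_good[OF c(2) c(1) x(3)] x(1) by (meson converse_rtrancl_into_rtrancl)
    qed
  qed
  have vp: "verts (X, Y) = X" "edges (X, Y) = Y" for X :: "(nat \<times> nat) set" and Y
    by (simp_all add: verts_def edges_def)
  show ?thesis unfolding connected_graph_def vp verts_G
  proof (intro conjI ballI)
    show "{0..<t} \<times> {0..<s} \<noteq> {}" using t1 s3 by auto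
  next
    fix u w assume "u \<in> {0..<t} \<times> {0..<s}" "w \<in> {0..<t} \<times> {0..<s}"
    then show "(u, w) \<in> R\<^sup>*" using reach Rsym by (meson rtrancl_trans)
  qed
qed

end



lemma rung_cut:
  assumes t1: "t \<ge> 1" and s3: "s \<ge> 3" and DE: "D \<subseteq> edges (HG t s)" and jk: "j < k" "k < s"
    and nj: "\<And>v. v < t \<Longrightarrow> {(v,j),(v,Suc j mod s)} \<notin> D"
    and nk: "\<And>v. v < t \<Longrightarrow> {(v,k),(v,Suc k mod s)} \<notin> D"
  shows "\<not> connected_graph (verts (HG t s), D)"
proof
  define S where "S = {x. fst x < t \<and> j < snd x \<and> snd x \<le> k}"
  have clos: "y \<in> S" if xy: "(x, y) \<in> adj_rel D" and xS: "x \<in> S" for x y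
  proof -
    from xy have e: "{x,y} \<in> D" "x \<noteq> y" unfolding adj_rel_def by auto
    then have "{x,y} \<in> edges (HG t s)" using DE by auto
    then show ?thesis unfolding edges_G_iff
    proof (elim disjE exE conjE)
      fix w m assume w: "w < t" "m < s" and ee: "{x, y} = {(w, m), (w, Suc m mod s)}"
      have mj: "m \<noteq> j" using nj[OF w(1)] e(1) ee by auto
      have mk: "m \<noteq> k" using nk[OF w(1)] e(1) ee by auto
      from ee e(2) have "(x = (w,m) \<and> y = (w, Suc m mod s)) \<or> (x = (w, Suc m mod s) \<and> y = (w,m))"
        by (auto simp: doubleton_eq_iff)
      then show ?thesis
      proof
        assume h: "x = (w,m) \<and> y = (w, Suc m mod s)"
        then have "j < m" "m < k" using xS mk unfolding S_def by auto
        then have "Suc m mod s = Suc m" using jk by simp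
        then show ?thesis using h w \<open>j < m\<close> \<open>m < k\<close> unfolding S_def by auto
      next
        assume h: "x = (w, Suc m mod s) \<and> y = (w,m)"
        then have a: "j < Suc m mod s" "Suc m mod s \<le> k" using xS unfolding S_def by auto
        have "Suc m \<noteq> s" using a by auto
        then have "Suc m mod s = Suc m" using w(2) by simp
        then show ?thesis using h w a mj unfolding S_def by auto
      qed
    next
      fix a b m assume "a < t" "b < t" "a \<noteq> b" "m < s" "{x, y} = {(a, m), (b, m)}"
      then show ?thesis using xS unfolding S_def by (auto simp: doubleton_eq_iff)
    qed
  qed
  assume "connected_graph (verts (HG t s), D)"
  moreover have vp: "verts (X, Y) = X" "edges (X, Y) = Y" for X :: "(nat \<times> nat) set" and Y
    by (simp_all add: verts_def edges_def)
  ultimately have "\<forall>u\<in>{0..<t} \<times> {0..<s}. \<forall>w\<in>{0..<t} \<times> {0..<s}. (u, w) \<in> (adj_rel D)\<^sup>*"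
    unfolding connected_graph_def vp verts_G by blast
  moreover have "(0, Suc j) \<in> {0..<t} \<times> {0..<s}" "(0, j) \<in> {0..<t} \<times> {0..<s}" using t1 jk by auto
  ultimately have "((0, Suc j), (0, j)) \<in> (adj_rel D)\<^sup>*" by blast
  moreover have "(0, Suc j) \<in> S" using t1 jk unfolding S_def by auto
  ultimately have "(0, j) \<in> S"
    by (induction rule: rtrancl_induct) (auto intro: clos)
  then show False unfolding S_def by simp
qed

lemma choose_calc: "t \<ge> 1 \<Longrightarrow> (2 ^ t + 1) choose 2 = (2 ^ t + 1) * 2 ^ (t - 1)"
proof -
  assume "t \<ge> 1"
  then obtain u where u: "t = Suc u" by (cases t) auto
  show ?thesis unfolding choose_two u by simp
qed

lemma code_bound:
  assumes t1: "t \<ge> 1" and s3: "s \<ge> 3" and sbig: "s > (2 ^ t + 1) * 2 ^ (t - 1)"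
    and code: "connectivity_code (HG t s) C"
  shows "card C \<le> 2 ^ t"
proof (rule ccontr)
  assume "\<not> ?thesis"
  then have big: "card C \<ge> 2 ^ t + 1" by simp
  then have finC: "finite C" using card.infinite by fastforce
  obtain C' where C': "C' \<subseteq> C" "card C' = 2 ^ t + 1" using obtain_subset_with_card_n[OF big] by blast
  have finC': "finite C'" using C' finC finite_subset by blast
  define r where "r j E' = {v \<in> {0..<t}. {(v,j),(v,Suc j mod s)} \<in> E'}" for j :: nat and E' :: "(nat \<times> nat) set set"
  have agree: "\<exists>A. A \<subseteq> C' \<and> card A = 2 \<and> (\<forall>E1\<in>A. \<forall>E2\<in>A. r j E1 = r j E2)" for j
  proof -
    have "r j ` C' \<subseteq> Pow {0..<t}" unfolding r_def by auto
    moreover have "card (Pow {0..<t}) = 2 ^ t" by (simp add: card_Pow)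
    ultimately have "\<not> inj_on (r j) C'" using card_inj_on_le[of "r j" C' "Pow {0..<t}"] C'(2) by auto
    then obtain E1 E2 where "E1 \<in> C'" "E2 \<in> C'" "E1 \<noteq> E2" "r j E1 = r j E2"
      unfolding inj_on_def by blast
    then show ?thesis by (intro exI[of _ "{E1,E2}"]) auto
  qed
  define p where "p j = (SOME A. A \<subseteq> C' \<and> card A = 2 \<and> (\<forall>E1\<in>A. \<forall>E2\<in>A. r j E1 = r j E2))" for j
  have p: "p j \<subseteq> C' \<and> card (p j) = 2 \<and> (\<forall>E1\<in>p j. \<forall>E2\<in>p j. r j E1 = r j E2)" for j
    unfolding p_def using someI_ex[OF agree] .
  define P where "P = {A. A \<subseteq> C' \<and> card A = 2}"
  have cP: "card P = (2 ^ t + 1) * 2 ^ (t - 1)"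
    unfolding P_def n_subsets[OF finC'] C'(2) using choose_calc[OF t1] .
  have finP: "finite P" unfolding P_def using finC' by auto
  have "p ` {0..<s} \<subseteq> P" unfolding P_def using p by blast
  then have "\<not> inj_on p {0..<s}" using card_inj_on_le[of p "{0..<s}" P] finP cP sbig by auto
  then obtain j k where jk: "j < s" "k < s" "j \<noteq> k" "p j = p k" unfolding inj_on_def by auto
  have "card (p j) = 2" using p by blast
  then obtain E1 E2 where E12: "p j = {E1, E2}" "E1 \<noteq> E2" unfolding card_2_iff by blast
  have "p j \<subseteq> C" using p[of j] C'(1) by blast
  then have inC: "E1 \<in> C" "E2 \<in> C" using E12(1) by blast+
  have aj: "\<forall>E1\<in>p j. \<forall>E2\<in>p j. r j E1 = r j E2" using p by blast
  have ak: "\<forall>E1\<in>p k. \<forall>E2\<in>p k. r k E1 = r k E2" using p by blast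
  have rj: "r j E1 = r j E2" using aj E12(1) by blast
  have rk: "r k E1 = r k E2" using ak E12(1) jk(4) by blast
  define D where "D = (E1 - E2) \<union> (E2 - E1)"
  have conn: "connected_graph (verts (HG t s), D)"
    using code inC E12(2) unfolding connectivity_code_def D_def by blast
  have DE: "D \<subseteq> edges (HG t s)" using code inC unfolding connectivity_code_def D_def by blast
  have nD: "{(v,m),(v,Suc m mod s)} \<notin> D" if "r m E1 = r m E2" "v < t" for v m
  proof -
    have "v \<in> r m E1 \<longleftrightarrow> v \<in> r m E2" using that(1) by simp
    then have "{(v,m),(v,Suc m mod s)} \<in> E1 \<longleftrightarrow> {(v,m),(v,Suc m mod s)} \<in> E2"
      unfolding r_def using that(2) by simp
    then show ?thesis unfolding D_def by blast
  qed
  show False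
  proof (cases "j < k")
    case True
    show False using rung_cut[OF t1 s3 DE True jk(2)] nD rj rk conn by blast
  next
    case False
    then have "k < j" using jk(3) by simp
    show False using rung_cut[OF t1 s3 DE \<open>k < j\<close> jk(1)] nD rj rk conn by blast
  qed
qed


lemma edge_conn_HG:
  assumes t1: "t \<ge> 1" and s3: "s \<ge> 3" and ts: "t < s"
  shows "edge_connectivity (HG t s) = t + 1"
proof -
  let ?E = "edges (HG t s)"
  let ?V = "verts (HG t s)"
  let ?EC = "{card F | F. F \<subseteq> ?E \<and> \<not> connected_graph (?V, ?E - F)}"
  have vp: "verts (X, Y) = X" "edges (X, Y) = Y" for X :: "(nat \<times> nat) set" and Y
    by (simp_all add: verts_def edges_def)
  define F0 where "F0 = {e \<in> ?E. (0,0) \<in> e}"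
  have cF0: "card F0 = t + 1" unfolding F0_def using degree_HG[of 0 t 0 s] t1 s3 unfolding degree_def by simp
  have nc: "\<not> connected_graph (?V, ?E - F0)"
  proof
    assume "connected_graph (?V, ?E - F0)"
    moreover have "(0,0) \<in> ?V" "(0,1) \<in> ?V" using t1 s3 unfolding verts_G by auto
    ultimately have "((0,0),(0,1)) \<in> (adj_rel (?E - F0))\<^sup>*"
      unfolding connected_graph_def vp by blast
    then show False
    proof (rule converse_rtranclE)
      assume "(0::nat, 0::nat) = (0, 1)" then show False by simp
    next
      fix z assume "((0,0), z) \<in> adj_rel (?E - F0)"
      then have "{(0,0), z} \<in> ?E - F0" unfolding adj_rel_def by auto
      then show False unfolding F0_def by auto
    qed
  qed
  have F0sub: "F0 \<subseteq> ?E" unfolding F0_def by auto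
  have "t + 1 = card F0 \<and> F0 \<subseteq> ?E \<and> \<not> connected_graph (?V, ?E - F0)" using nc cF0 F0sub by simp
  then have mem: "t + 1 \<in> ?EC" by blast
  have fin: "finite ?EC"
  proof -
    have "?EC \<subseteq> card ` Pow ?E" by auto
    then show ?thesis using finite_E by (meson finite_Pow_iff finite_imageI finite_subset)
  qed
  have low: "t + 1 \<le> n" if nEC: "n \<in> ?EC" for n
  proof (rule ccontr)
    assume "\<not> t + 1 \<le> n"
    obtain F where F: "n = card F" "F \<subseteq> ?E" "\<not> connected_graph (?V, ?E - F)" using nEC by blast
    have "card F \<le> t" using F(1) \<open>\<not> t + 1 \<le> n\<close> by simp
    then show False using conn_after_removal[OF t1 s3 ts F(2)] F(3) by blast
  qed
  show ?thesis unfolding edge_connectivity_def vp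
    by (rule Min_eqI[OF fin low mem])
qed

lemma max_code_HG:
  assumes t1: "t \<ge> 1" and s3: "s \<ge> 3" and sbig: "s > (2 ^ t + 1) * 2 ^ (t - 1)"
  shows "max_code (HG t s) \<le> 2 ^ t"
proof -
  let ?S = "{card C | C. connectivity_code (HG t s) C}"
  have sub: "?S \<subseteq> {..2 ^ t}" using code_bound[OF t1 s3 sbig] by auto
  have fin: "finite ?S" using sub finite_subset by blast
  have ne: "?S \<noteq> {}"
  proof -
    have "connectivity_code (HG t s) {}" unfolding connectivity_code_def by simp
    then show ?thesis by blast
  qed
  show ?thesis unfolding max_code_def using Max_in[OF fin ne] sub by auto
qed

theorem proposition3p2:
  fixes t s :: nat
  assumes "t \<ge> 1" and "s \<ge> 3" and "s > (2 ^ t + 1) * 2 ^ (t - 1)"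
  shows "regular (t + 1) (cart_prod (complete_graph t) (cycle_graph s)) \<and>
         edge_connectivity (cart_prod (complete_graph t) (cycle_graph s)) = t + 1 \<and>
         max_code (cart_prod (complete_graph t) (cycle_graph s)) \<le> 2 ^ t"
proof -
  have "t < 2 ^ t" by (rule less_exp)
  moreover have "(2::nat) ^ t + 1 \<le> (2 ^ t + 1) * 2 ^ (t - 1)"
    using mult_le_mono2[of 1 "(2::nat) ^ (t - 1)" "2 ^ t + 1"] by simp
  ultimately have ts: "t < s" using assms(3) by linarith
  show ?thesis using regular_HG[OF assms(2)] edge_conn_HG[OF assms(1,2) ts] max_code_HG[OF assms] by blast
qed

end
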